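(* Let $F=\{\mathbb{R}^{n};f_{1},\dots,f_{m}\}$ be an IFS of contractive similitudes (at least two distinct maps) that obeys the open set condition, with contraction factors $\lambda_i=s^{a_i}$ where $s=\max_i\lambda_i$. Suppose $a_{i}\in\mathbb{N}$ and the costs are $c_{i}=a_{i}$ for all $i=1,\dots,m$. Then for every closed $T\subset\mathbb{R}^n$ and every $\mathbf{i}\in\Sigma^{\infty}$ the tiling $\Pi_{T}(\mathbf{i})$ is commensurate; in particular $\Pi(\mathbf{i})=\Pi_A(\mathbf{i})$ and $\Xi(\mathbf{i})=\Pi_{\overline{C}}(\mathbf{i})$ are commensurate.
   Context: An IFS $F$ consists of maps $f_{i}:\mathbb{R}^{n}\to\mathbb{R}^{n}$ with $|f_{i}(x)-f_{i}(y)|=\lambda_{i}|x-y|$, $\lambda_{i}\in(0,1)$; its attractor $A$ is the unique nonempty compact set with $A=\bigcup_i f_i(A)$. $F$ obeys the open set condition if there is a nonempty open $O$ with $f_i(O)\subset O$ for all $i$ and $f_{i}(O)\cap f_{j}(O)=\emptyset$ for $i\neq j$. Let $\Sigma=\{1,\dots,m\}$, $\Sigma^{*}$ the nonempty finite words, $\Sigma^{\infty}$ the infinite sequences; $f_{\mathbf{i}}=f_{i_{1}}\circ\cdots\circ f_{i_{k}}$ for a word. The central open set is $C=\{x:d(x,A)<d(x,H)\}$ where $H=\bigcup\{f_{\mathbf{i}}^{-1}f_{\mathbf{j}}(A):\mathbf{i},\mathbf{j}\in\Sigma^{*},i_1\neq j_1\}$ and $d(x,Y)=\inf_{y\in Y}|x-y|$.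 For $\mathbf{i}\in\Sigma^{\infty}$: $\mathbf{i}|k=i_{1}\dots i_{k}$, $\mathbf{i}|0=\emptyset$, $f_{(\mathbf{j}|l)}=f_{j_{1}}\circ\cdots\circ f_{j_{l}}$, $f_{-(\mathbf{i}|k)}=f_{i_{1}}^{-1}\circ\cdots\circ f_{i_{k}}^{-1}$, $c(\mathbf{i}|k)=c_{i_{1}}+\cdots+c_{i_{k}}$, $c(\emptyset)=0$; \[ \Pi_{T}(\mathbf{i}|k)=f_{-(\mathbf{i}|k)}\big(\{f_{(\mathbf{j}|l)}(T):\mathbf{j}\in\Sigma^{\infty},\ l\in\mathbb{N},\ c(\mathbf{j}|l-1)\leq c(\mathbf{i}|k)<c(\mathbf{j}|l)\}\big),\quad \Pi_{T}(\mathbf{i})=\bigcup_{k\geq1}\Pi_{T}(\mathbf{i}|k). \] Each tile of $\Pi_T(\mathbf{i})$ is an image of $T$ under a similitude; its size is measured relative to $T$ by the similarity ratio. A tiling is commensurate if the sizes of all its tiles belong to a geometric progression. *)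

theory Defs
  imports "HOL-Analysis.Analysis"
begin

text \<open>Alphabet: indices 0..<m (the paper's 1..m shifted by one).
  Finite words are lists, infinite words are sequences nat => nat.\<close>

definition seqs :: "nat \<Rightarrow> (nat \<Rightarrow> nat) set" where
  "seqs m = {w. \<forall>k. w k < m}"

definition words :: "nat \<Rightarrow> nat list set" where
  "words m = {w. w \<noteq> [] \<and> set w \<subseteq> {..<m}}"

definition pref :: "(nat \<Rightarrow> nat) \<Rightarrow> nat \<Rightarrow> nat list" where
  "pref w k = map w [0..<k]"

definition fw :: "(nat \<Rightarrow> 'a \<Rightarrow> 'a) \<Rightarrow> nat list \<Rightarrow> 'a \<Rightarrow> 'a" where
  "fw f w = foldr (\<circ>) (map f w) id"

definition fwinv :: "(nat \<Rightarrow> 'a \<Rightarrow> 'a) \<Rightarrow> nat list \<Rightarrow> 'a \<Rightarrow> 'a" where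
  "fwinv f w = foldr (\<circ>) (map (\<lambda>i. inv (f i)) w) id"

definition cost :: "(nat \<Rightarrow> real) \<Rightarrow> nat list \<Rightarrow> real" where
  "cost c w = sum_list (map c w)"

definition similitude :: "('a::metric_space \<Rightarrow> 'a) \<Rightarrow> real \<Rightarrow> bool" where
  "similitude g r \<longleftrightarrow> r > 0 \<and> (\<forall>x y. dist (g x) (g y) = r * dist x y)"

definition sim_ratio :: "('a::metric_space \<Rightarrow> 'a) \<Rightarrow> real" where
  "sim_ratio g = (SOME r. similitude g r)"

definition OSC :: "nat \<Rightarrow> (nat \<Rightarrow> 'a::topological_space \<Rightarrow> 'a) \<Rightarrow> bool" where
  "OSC m f \<longleftrightarrow> (\<exists>U. open U \<and> U \<noteq> {} \<and> (\<forall>i<m. f i ` U \<subseteq> U) \<and>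
      (\<forall>i<m. \<forall>j<m. i \<noteq> j \<longrightarrow> f i ` U \<inter> f j ` U = {}))"

definition attractor :: "nat \<Rightarrow> (nat \<Rightarrow> 'a::metric_space \<Rightarrow> 'a) \<Rightarrow> 'a set" where
  "attractor m f = (THE A. compact A \<and> A \<noteq> {} \<and> A = (\<Union>i<m. f i ` A))"

definition Hset :: "nat \<Rightarrow> (nat \<Rightarrow> 'a::metric_space \<Rightarrow> 'a) \<Rightarrow> 'a set" where
  "Hset m f = \<Union>{inv (fw f u) ` (fw f v ` attractor m f) | u v.
       u \<in> words m \<and> v \<in> words m \<and> hd u \<noteq> hd v}"

definition central_open_set :: "nat \<Rightarrow> (nat \<Rightarrow> 'a::metric_space \<Rightarrow> 'a) \<Rightarrow> 'a set" where
  "central_open_set m f = {x. infdist x (attractor m f) < infdist x (Hset m f)}"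

text \<open>Tiles of Pi_T(i): a tile is recorded together with the similitude that produces it
  from T, i.e. as the pair (g, g ` T); its size is the similarity ratio of g.\<close>
definition tiling :: "nat \<Rightarrow> (nat \<Rightarrow> 'a \<Rightarrow> 'a) \<Rightarrow> (nat \<Rightarrow> real) \<Rightarrow> 'a set
     \<Rightarrow> (nat \<Rightarrow> nat) \<Rightarrow> (('a \<Rightarrow> 'a) \<times> 'a set) set" where
  "tiling m f c T w = {(g, g ` T) | g. \<exists>k j l. k \<ge> 1 \<and> j \<in> seqs m \<and>
       cost c (pref j (l - 1)) \<le> cost c (pref w k) \<and> cost c (pref w k) < cost c (pref j l) \<and>
       g = fwinv f (pref w k) \<circ> fw f (pref j l)}"

definition commensurate :: "(('a::metric_space \<Rightarrow> 'a) \<times> 'a set) set \<Rightarrow> bool" where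
  "commensurate P \<longleftrightarrow> (\<exists>q r. q > 0 \<and> r > 0 \<and>
       (\<forall>t\<in>P. \<exists>k::nat. sim_ratio (fst t) = q * r ^ k))"

end

theory Submission
  imports Defs
begin

definition simr :: "('a::metric_space \<Rightarrow> 'a) \<Rightarrow> real \<Rightarrow> bool" where
  "simr g r \<longleftrightarrow> (\<forall>x y. dist (g x) (g y) = r * dist x y)"

lemma sim_surj:
  fixes f :: "'a::euclidean_space \<Rightarrow> 'a"
  assumes d: "\<And>x y. dist (f x) (f y) = c * dist x y" and c: "c > 0"
  shows "surj f"
proof -
  define h where "h x = f x - f 0" for x
  have h0: "h 0 = 0" by (simp add: h_def)
  have hd: "\<forall>x y. dist (h x) (h y) = c * dist x y"
    by (simp add: h_def dist_norm d[unfolded dist_norm])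
  have lin: "linear h" by (rule scaling_linear[OF h0 hd])
  have "inj h"
  proof
    fix x y assume "h x = h y"
    then have "c * dist x y = 0" using hd by (metis dist_self)
    then show "x = y" using c by simp
  qed
  then have "surj h" using linear_inj_imp_surj[OF lin] by blast
  have "\<exists>x. y = f x" for y
  proof -
    obtain x where "h x = y - f 0" using \<open>surj h\<close> by (metis surjD)
    then show ?thesis by (auto simp: h_def)
  qed
  then show ?thesis by (auto simp: surj_def)
qed

lemma simr_comp: "simr g r \<Longrightarrow> simr h t \<Longrightarrow> simr (g \<circ> h) (r * t)"
  by (simp add: simr_def)

lemma simr_inv:
  fixes f :: "'a::euclidean_space \<Rightarrow> 'a"
  assumes "simr f c" "c > 0"
  shows "simr (inv f) (1 / c)"
proof -
  have s: "surj f" using sim_surj[of f c] assms by (auto simp: simr_def)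
  show ?thesis unfolding simr_def
  proof (intro allI)
    fix x y
    have "dist x y = c * dist (inv f x) (inv f y)"
      using assms(1) surj_f_inv_f[OF s] unfolding simr_def by metis
    then show "dist (inv f x) (inv f y) = 1 / c * dist x y" using assms(2) by simp
  qed
qed

lemma simr_fw:
  fixes f :: "nat \<Rightarrow> 'a::euclidean_space \<Rightarrow> 'a"
  assumes "\<And>i. i \<in> set u \<Longrightarrow> simr (f i) (lam i)"
  shows "simr (fw f u) (prod_list (map lam u))"
  using assms
proof (induction u)
  case Nil then show ?case by (simp add: fw_def simr_def)
next
  case (Cons x u)
  have "simr (f x \<circ> fw f u) (lam x * prod_list (map lam u))"
    using Cons by (intro simr_comp) auto
  then show ?case by (simp add: fw_def comp_def)
qed

lemma simr_fwinv:
  fixes f :: "nat \<Rightarrow> 'a::euclidean_space \<Rightarrow> 'a"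
  assumes "\<And>i. i \<in> set u \<Longrightarrow> simr (f i) (lam i) \<and> lam i > 0"
  shows "simr (fwinv f u) (prod_list (map (\<lambda>i. 1 / lam i) u))"
  using assms
proof (induction u)
  case Nil then show ?case by (simp add: fwinv_def simr_def)
next
  case (Cons x u)
  have "simr (inv (f x)) (1 / lam x)" using simr_inv Cons.prems by auto
  have "simr (inv (f x) \<circ> fwinv f u) (1 / lam x * prod_list (map (\<lambda>i. 1 / lam i) u))"
    using Cons \<open>simr (inv (f x)) (1 / lam x)\<close> by (intro simr_comp) auto
  then show ?case by (simp add: fwinv_def comp_def)
qed

lemma sim_ratio_eq:
  fixes g :: "real ^ 'n \<Rightarrow> real ^ 'n"
  assumes "simr g r" "r > 0"
  shows "sim_ratio g = r"
proof -
  have sg: "similitude g r" using assms by (simp add: similitude_def simr_def)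
  define x :: "real ^ 'n" where "x = 0"
  define y :: "real ^ 'n" where "y = 1"
  have xy: "x \<noteq> y" unfolding x_def y_def by simp
  have "similitude g (sim_ratio g)" unfolding sim_ratio_def by (rule someI[of _ r], rule sg)
  then have "dist (g x) (g y) = sim_ratio g * dist x y" by (simp add: similitude_def)
  moreover have "dist (g x) (g y) = r * dist x y" using sg by (simp add: similitude_def)
  ultimately have "sim_ratio g * dist x y = r * dist x y" by linarith
  moreover have "dist x y > 0" using xy by simp
  ultimately show ?thesis by simp
qed

lemma prod_pow:
  assumes "\<And>i. i \<in> set u \<Longrightarrow> lam i = (s::real) ^ a i"
  shows "prod_list (map lam u) = s ^ sum_list (map a u)"
  using assms by (induction u) (auto simp: power_add)

lemma prod_pow_inv:
  assumes "\<And>i. i \<in> set u \<Longrightarrow> lam i = (s::real) ^ a i"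
  shows "prod_list (map (\<lambda>i. 1 / lam i) u) = 1 / s ^ sum_list (map a u)"
  using assms by (induction u) (auto simp: power_add)

lemma cost_nat: "cost (\<lambda>i. real (a i)) u = real (sum_list (map a u))"
  by (induction u) (auto simp: cost_def)

lemma pref_Suc: "pref j (Suc l) = pref j l @ [j l]"
  by (simp add: pref_def)

lemma set_pref: "w \<in> seqs m \<Longrightarrow> set (pref w k) \<subseteq> {..<m}"
  by (auto simp: pref_def seqs_def)

theorem theorem2:
  fixes f :: "nat \<Rightarrow> real ^ 'n \<Rightarrow> real ^ 'n"
    and lam :: "nat \<Rightarrow> real" and a :: "nat \<Rightarrow> nat" and m :: nat and s :: real
  assumes m2: "m \<ge> 2"
    and distinct: "\<exists>i<m. \<exists>j<m. f i \<noteq> f j"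
    and sim: "\<And>i x y. i < m \<Longrightarrow> dist (f i x) (f i y) = lam i * dist x y"
    and lam: "\<And>i. i < m \<Longrightarrow> 0 < lam i \<and> lam i < 1"
    and osc: "OSC m f"
    and s_def: "s = Max (lam ` {..<m})"
    and a: "\<And>i. i < m \<Longrightarrow> lam i = s ^ a i"
  shows "(\<forall>T w. closed T \<longrightarrow> w \<in> seqs m \<longrightarrow>
            commensurate (tiling m f (\<lambda>i. real (a i)) T w))
       \<and> (\<forall>w\<in>seqs m. commensurate (tiling m f (\<lambda>i. real (a i)) (attractor m f) w))
       \<and> (\<forall>w\<in>seqs m. commensurate (tiling m f (\<lambda>i. real (a i)) (closure (central_open_set m f)) w))"
proof -
  have "s \<in> lam ` {..<m}" unfolding s_def proof (intro Max_in)
    show "finite (lam ` {..<m})" by simp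
    show "lam ` {..<m} \<noteq> {}" using m2 by (simp add: lessThan_empty_iff)
  qed
  then have s0: "s > 0" using lam by auto
  define M where "M = Max (a ` {..<m})"
  have aM: "a i \<le> M" if "i < m" for i unfolding M_def using that by auto
  have main: "commensurate (tiling m f (\<lambda>i. real (a i)) T w)" if w: "w \<in> seqs m" for T w
    unfolding commensurate_def
  proof (rule exI[of _ "s ^ M"], rule exI[of _ "1 / s"], intro conjI ballI)
    show "s ^ M > 0" using s0 by simp
    show "1 / s > 0" using s0 by simp
    fix t assume "t \<in> tiling m f (\<lambda>i. real (a i)) T w"
    then obtain k j l where j: "j \<in> seqs m" and
      c1: "cost (\<lambda>i. real (a i)) (pref j (l - 1)) \<le> cost (\<lambda>i. real (a i)) (pref w k)" and
      c2: "cost (\<lambda>i. real (a i)) (pref w k) < cost (\<lambda>i. real (a i)) (pref j l)" and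
      t: "fst t = fwinv f (pref w k) \<circ> fw f (pref j l)"
      unfolding tiling_def by auto
    define Aw where "Aw = sum_list (map a (pref w k))"
    define Aj where "Aj = sum_list (map a (pref j l))"
    have l1: "l \<ge> 1" using c1 c2 by (cases l) auto
    then obtain l' where l': "l = Suc l'" by (cases l) auto
    have Ajs: "Aj = sum_list (map a (pref j l')) + a (j l')"
      unfolding Aj_def l' pref_Suc by simp
    have jl: "j l' < m" using j by (simp add: seqs_def)
    have i1: "sum_list (map a (pref j l')) \<le> Aw" "Aw < Aj"
      using c1 c2 unfolding cost_nat Aw_def Aj_def l' by auto
    define D where "D = Aj - Aw"
    have D: "D \<le> M" "Aj = Aw + D" using i1 Ajs aM[OF jl] unfolding D_def by auto
    have sw: "set (pref w k) \<subseteq> {..<m}" "set (pref j l) \<subseteq> {..<m}"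
      using set_pref w j by auto
    have simf: "simr (f i) (lam i) \<and> lam i > 0" if "i < m" for i
      using sim lam that by (auto simp: simr_def)
    have e1: "prod_list (map (\<lambda>i. 1 / lam i) (pref w k)) = 1 / s ^ Aw"
      unfolding Aw_def by (rule prod_pow_inv) (use sw a in blast)
    have e2: "prod_list (map lam (pref j l)) = s ^ Aj"
      unfolding Aj_def by (rule prod_pow) (use sw a in blast)
    have g1: "simr (fwinv f (pref w k)) (1 / s ^ Aw)"
      unfolding e1[symmetric] by (rule simr_fwinv) (use sw simf in blast)
    have g2: "simr (fw f (pref j l)) (s ^ Aj)"
      unfolding e2[symmetric] by (rule simr_fw) (use sw simf in blast)
    have "simr (fst t) (1 / s ^ Aw * s ^ Aj)" unfolding t by (rule simr_comp[OF g1 g2])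
    moreover have "1 / s ^ Aw * s ^ Aj = s ^ D" using s0 D(2) by (simp add: power_add)
    ultimately have "simr (fst t) (s ^ D)" by simp
    then have "sim_ratio (fst t) = s ^ D" using sim_ratio_eq[of "fst t" "s ^ D"] s0 by simp
    also have "s ^ D = s ^ M * (1 / s) ^ (M - D)"
    proof -
      have "s ^ M = s ^ D * s ^ (M - D)" using D(1) by (simp add: power_add[symmetric])
      then show ?thesis using s0 by (simp add: power_one_over field_simps)
    qed
    finally show "\<exists>k::nat. sim_ratio (fst t) = s ^ M * (1 / s) ^ k" by blast
  qed
  show ?thesis using main by blast
qed

end
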